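(* Consider the admission control model described in the context, with discount rate $\alpha>0$, and suppose: (i) $0\le \Delta d_{i+1}\le \Delta d_i$ for $1\le i\le n-1$, and $\Delta d_1>0$; (ii) $\Delta h_{i+1}\ge \Delta h_i\ge 0$ for $1\le i\le n-1$. Define $\nu_0=\Delta h_1/(\alpha+\Delta d_1)$ and, for $1\le j\le n-1$, $$\nu_j=\nu_{j-1}+\frac{\Delta h_{j+1}-\nu_{j-1}(\alpha+\Delta d_{j+1})}{\alpha+\Delta d_{j+1}+w^{S_{j+1}}_{j-1}/\rho_{j-1}}.$$ Then: (a) $\dfrac{\Delta h_j}{\alpha+\Delta d_j}\le \dfrac{\Delta h_{j+1}}{\alpha+\Delta d_{j+1}}$ for $1\le j\le n-1$; (b) $\nu_j\le \dfrac{\Delta h_{j+1}}{\alpha+\Delta d_{j+1}}$ for $0\le j\le n-1$; (c) $\nu_0\le\nu_1\le\cdots\le\nu_{n-1}$.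
   Context: Admission control model: a single-server queue whose number in system $L(t)\in\{0,1,\dots,n\}$ ($n\ge1$) evolves in continuous time; in state $i$ arrivals occur at rate $\lambda_i>0$ and services at rate $\mu_i>0$ ($1\le i\le n$), $\mu_0=0$. At each time the entry gate is shut ($a=1$, arrivals rejected) or open ($a=0$, arrivals admitted); in state $n$ it is always shut. Holding costs accrue at rate $h_i$ in state $i$; discount rate $\alpha>0$. For $S\subseteq\{0,\dots,n-1\}$, the $S$-active policy shuts the gate exactly in states $S\cup\{n\}$; $b^S_i=E_i[\int_0^\infty\lambda_{L(t)}a(t)e^{-\alpha t}dt]$ under it, starting from $i$. Marginal workloads: $w^S_i=\lambda_i[1-(b^S_{i+1}-b^S_i)]$, $0\le i\le n-1$. $S_k=\{k-1,\dots,n-1\}$ for $1\le k\le n$. Notation: $\Delta x_i=x_i-x_{i-1}$; $d_i=\mu_i-\lambda_i$ ($d_0=-\lambda_0$); $\rho_i=\lambda_i/\mu_{i+1}$. *)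

theory Defs
  imports Complex_Main
begin

text \<open>Admission control model. States 0..n; lam i arrival rate, mu i service rate
  (mu 0 = 0), alpha discount rate. The gate is shut in states S \<union> {n}.\<close>

definition shut :: "nat \<Rightarrow> nat set \<Rightarrow> nat \<Rightarrow> bool" where
  "shut n S i \<longleftrightarrow> i \<in> S \<or> i = n"

text \<open>b^S: expected discounted rejected-arrival measure under the S-active policy,
  characterised as the unique solution of the discounted first-step (Dynkin/Bellman)
  equations on {0..n}; values outside {0..n} are set to 0.\<close>
definition bS :: "(nat \<Rightarrow> real) \<Rightarrow> (nat \<Rightarrow> real) \<Rightarrow> real \<Rightarrow> nat \<Rightarrow> nat set \<Rightarrow> nat \<Rightarrow> real" where
  "bS lam mu alpha n S = (THE b. (\<forall>i>n. b i = 0) \<and>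
     (\<forall>i\<le>n. alpha * b i =
        (if shut n S i then lam i else lam i * (b (Suc i) - b i))
        + (if i = 0 then 0 else mu i * (b (i - 1) - b i))))"

definition wS :: "(nat \<Rightarrow> real) \<Rightarrow> (nat \<Rightarrow> real) \<Rightarrow> real \<Rightarrow> nat \<Rightarrow> nat set \<Rightarrow> nat \<Rightarrow> real" where
  "wS lam mu alpha n S i = lam i * (1 - (bS lam mu alpha n S (Suc i) - bS lam mu alpha n S i))"

definition Sk :: "nat \<Rightarrow> nat \<Rightarrow> nat set" where
  "Sk n k = {k - 1 .. n - 1}"

definition dd :: "(nat \<Rightarrow> real) \<Rightarrow> (nat \<Rightarrow> real) \<Rightarrow> nat \<Rightarrow> real" where
  "dd lam mu i = mu i - lam i"

definition Dlt :: "(nat \<Rightarrow> real) \<Rightarrow> nat \<Rightarrow> real" where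
  "Dlt x i = x i - x (i - 1)"

definition rho :: "(nat \<Rightarrow> real) \<Rightarrow> (nat \<Rightarrow> real) \<Rightarrow> nat \<Rightarrow> real" where
  "rho lam mu i = lam i / mu (Suc i)"

fun nu :: "(nat \<Rightarrow> real) \<Rightarrow> (nat \<Rightarrow> real) \<Rightarrow> (nat \<Rightarrow> real) \<Rightarrow> real \<Rightarrow> nat \<Rightarrow> nat \<Rightarrow> real" where
  "nu lam mu h alpha n 0 = Dlt h 1 / (alpha + Dlt (dd lam mu) 1)"
| "nu lam mu h alpha n (Suc j) = nu lam mu h alpha n j +
     (Dlt h (j + 2) - nu lam mu h alpha n j * (alpha + Dlt (dd lam mu) (j + 2))) /
     (alpha + Dlt (dd lam mu) (j + 2) + wS lam mu alpha n (Sk n (j + 2)) j / rho lam mu j)"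

end

theory Submission
  imports Defs
begin

definition sol :: "(nat \<Rightarrow> real) \<Rightarrow> (nat \<Rightarrow> real) \<Rightarrow> real \<Rightarrow> nat \<Rightarrow> nat set \<Rightarrow> (nat \<Rightarrow> real) \<Rightarrow> bool" where
  "sol lam mu alpha n S b \<longleftrightarrow> (\<forall>i>n. b i = 0) \<and>
     (\<forall>i\<le>n. alpha * b i =
        (if shut n S i then lam i else lam i * (b (Suc i) - b i))
        + (if i = 0 then 0 else mu i * (b (i - 1) - b i)))"

fun cc :: "(nat \<Rightarrow> real) \<Rightarrow> (nat \<Rightarrow> real) \<Rightarrow> real \<Rightarrow> nat \<Rightarrow> real" where
  "cc lam mu a 0 = 1"
| "cc lam mu a (Suc 0) = (a + lam 0) / lam 0"
| "cc lam mu a (Suc (Suc i)) = cc lam mu a (Suc i) +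
     (a * cc lam mu a (Suc i) + mu (Suc i) * (cc lam mu a (Suc i) - cc lam mu a i)) / lam (Suc i)"

fun gg :: "(nat \<Rightarrow> real) \<Rightarrow> (nat \<Rightarrow> real) \<Rightarrow> real \<Rightarrow> nat \<Rightarrow> real \<Rightarrow> nat \<Rightarrow> real" where
  "gg lam mu a k t0 0 = t0"
| "gg lam mu a k t0 (Suc m) = (lam (k + Suc m) + mu (k + Suc m) * gg lam mu a k t0 m) / (a + mu (k + Suc m))"

lemma shut_iff: "k < n \<Longrightarrow> i \<le> n \<Longrightarrow> shut n {k..n-1} i \<longleftrightarrow> k \<le> i"
  unfolding shut_def by auto

lemma cc_pos:
  assumes a: "alpha > 0" and l: "\<forall>i\<le>n. lam i > 0" and m: "\<forall>i. 1 \<le> i \<and> i \<le> n \<longrightarrow> mu i > 0"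
  shows "i < n \<Longrightarrow> 0 < cc lam mu alpha i \<and> cc lam mu alpha i < cc lam mu alpha (Suc i)"
proof (induction i)
  case 0
  have "lam 0 > 0" using l by auto
  then show ?case using a by (simp add: field_simps)
next
  case (Suc i)
  then have h: "0 < cc lam mu alpha i" "cc lam mu alpha i < cc lam mu alpha (Suc i)" by auto
  have "lam (Suc i) > 0" "mu (Suc i) > 0" using l m Suc.prems by auto
  then have "0 < (alpha * cc lam mu alpha (Suc i) + mu (Suc i) * (cc lam mu alpha (Suc i) - cc lam mu alpha i)) / lam (Suc i)"
    using h a by (intro divide_pos_pos add_pos_pos mult_pos_pos) auto
  then show ?case using h by simp
qed

lemma cc_Q:
  assumes a: "alpha > 0" and l: "\<forall>i\<le>n. lam i > 0" and m: "\<forall>i. 1 \<le> i \<and> i \<le> n \<longrightarrow> mu i > 0"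
    and d1: "lam 1 - mu 1 < lam 0"
    and dm: "\<forall>i. 1 \<le> i \<and> i + 1 < n \<longrightarrow> lam (i+1) - mu (i+1) \<le> lam i - mu i"
  shows "Suc j < n \<Longrightarrow> (lam (Suc j) - mu (Suc j)) * (cc lam mu alpha (Suc j) - cc lam mu alpha j) \<le> alpha * cc lam mu alpha (Suc j)"
proof (induction j)
  case 0
  have l0: "lam 0 > 0" using l by auto
  have c1: "cc lam mu alpha 1 - cc lam mu alpha 0 = alpha / lam 0" using l0 by (simp add: field_simps)
  have "(lam 1 - mu 1) * (alpha / lam 0) \<le> lam 0 * (alpha / lam 0)"
    using d1 a l0 by (intro mult_right_mono) auto
  also have "\<dots> = alpha" using l0 by simp
  also have "\<dots> \<le> alpha * cc lam mu alpha 1" using l0 a by (simp add: field_simps)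
  finally show ?case using c1 by simp
next
  case (Suc j)
  let ?c = "cc lam mu alpha"
  have IH: "(lam (Suc j) - mu (Suc j)) * (?c (Suc j) - ?c j) \<le> alpha * ?c (Suc j)" using Suc by simp
  have lp: "lam (Suc j) > 0" using l Suc.prems by auto
  have D': "?c (Suc (Suc j)) - ?c (Suc j) = (alpha * ?c (Suc j) + mu (Suc j) * (?c (Suc j) - ?c j)) / lam (Suc j)" by simp
  have pos: "?c (Suc (Suc j)) - ?c (Suc j) > 0" using cc_pos[OF a l m, of "Suc j"] Suc.prems by simp
  have "lam (Suc j) * (?c (Suc j) - ?c j) \<le> alpha * ?c (Suc j) + mu (Suc j) * (?c (Suc j) - ?c j)" using IH by (simp add: algebra_simps)
  also have "\<dots> = lam (Suc j) * (?c (Suc (Suc j)) - ?c (Suc j))" using D' lp by simp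
  finally have DD: "?c (Suc j) - ?c j \<le> ?c (Suc (Suc j)) - ?c (Suc j)" using lp D' by (simp add: pos_le_divide_eq mult.commute)
  have dle: "lam (Suc (Suc j)) - mu (Suc (Suc j)) \<le> lam (Suc j) - mu (Suc j)" using dm Suc.prems
    by (metis Suc_eq_plus1 le_add2 plus_1_eq_Suc)
  have "(lam (Suc (Suc j)) - mu (Suc (Suc j))) * (?c (Suc (Suc j)) - ?c (Suc j)) \<le> (lam (Suc j) - mu (Suc j)) * (?c (Suc (Suc j)) - ?c (Suc j))"
    using dle pos by (intro mult_right_mono) auto
  also have "\<dots> = alpha * ?c (Suc j) + mu (Suc j) * (?c (Suc j) - ?c j) - mu (Suc j) * (?c (Suc (Suc j)) - ?c (Suc j))"
    using D' lp by (simp add: field_simps)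
  also have "\<dots> \<le> alpha * ?c (Suc j)"
  proof -
    have "mu (Suc j) \<ge> 0" using m[rule_format, of "Suc j"] Suc.prems by simp
    then have "mu (Suc j) * ((?c (Suc j) - ?c j) - (?c (Suc (Suc j)) - ?c (Suc j))) \<le> 0"
      using DD by (intro mult_nonneg_nonpos) auto
    then show ?thesis by (simp add: algebra_simps)
  qed
  also have "\<dots> \<le> alpha * ?c (Suc (Suc j))" using pos a by simp
  finally show ?case .
qed

lemma sol_eq:
  assumes "sol lam mu alpha n S b" "i \<le> n"
  shows "alpha * b i =
        (if shut n S i then lam i else lam i * (b (Suc i) - b i))
        + (if i = 0 then 0 else mu i * (b (i - 1) - b i))"
  using assms unfolding sol_def by blast

lemma sol_shape:
  assumes s: "sol lam mu alpha n {k..n-1} b" and k: "1 \<le> k" "k < n"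
    and l: "\<forall>i\<le>n. lam i > 0"
  shows "Suc i \<le> k \<Longrightarrow> b i = cc lam mu alpha i * b 0 \<and> b (Suc i) = cc lam mu alpha (Suc i) * b 0"
proof (induction i)
  case 0
  have e: "alpha * b 0 = lam 0 * (b 1 - b 0)" using sol_eq[OF s, of 0] shut_iff[OF k(2), of 0] k by simp
  have "lam 0 > 0" using l by auto
  then have "b 1 = (alpha + lam 0) / lam 0 * b 0" using e by (simp add: field_simps)
  then show ?case by simp
next
  case (Suc i)
  then have IH: "b i = cc lam mu alpha i * b 0" "b (Suc i) = cc lam mu alpha (Suc i) * b 0" by auto
  have e: "alpha * b (Suc i) = lam (Suc i) * (b (Suc (Suc i)) - b (Suc i)) + mu (Suc i) * (b i - b (Suc i))"
    using sol_eq[OF s, of "Suc i"] shut_iff[OF k(2), of "Suc i"] Suc.prems k by simp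
  have lp: "lam (Suc i) > 0" using l Suc.prems k by auto
  have "b (Suc (Suc i)) = b (Suc i) + (alpha * b (Suc i) + mu (Suc i) * (b (Suc i) - b i)) / lam (Suc i)"
    using e lp by (simp add: field_simps)
  then have "b (Suc (Suc i)) = cc lam mu alpha (Suc (Suc i)) * b 0"
    using IH by (simp add: field_simps)
  then show ?case using IH by simp
qed

lemma sol_b0:
  assumes s: "sol lam mu alpha n {k..n-1} b" and k: "1 \<le> k" "k < n"
    and l: "\<forall>i\<le>n. lam i > 0"
  shows "b 0 * (alpha * cc lam mu alpha k + mu k * (cc lam mu alpha k - cc lam mu alpha (k - 1))) = lam k"
proof -
  obtain i where i: "k = Suc i" using k by (cases k) auto
  have sh: "b i = cc lam mu alpha i * b 0" "b k = cc lam mu alpha k * b 0"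
    using sol_shape[OF s k l, of i] i by auto
  have e: "alpha * b k = lam k + mu k * (b i - b k)"
    using sol_eq[OF s, of k] shut_iff[OF k(2), of k] k i by simp
  show ?thesis using e sh i by (simp add: algebra_simps)
qed

lemma E_pos:
  assumes a: "alpha > 0" and l: "\<forall>i\<le>n. lam i > 0" and m: "\<forall>i. 1 \<le> i \<and> i \<le> n \<longrightarrow> mu i > 0"
    and k: "1 \<le> k" "k < n"
  shows "alpha * cc lam mu alpha k + mu k * (cc lam mu alpha k - cc lam mu alpha (k - 1)) > 0"
proof -
  obtain i where i: "k = Suc i" using k by (cases k) auto
  have "0 < cc lam mu alpha i \<and> cc lam mu alpha i < cc lam mu alpha k"
    using cc_pos[OF a l m, of i] i k by auto
  moreover have "mu k > 0" using m k by auto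
  ultimately show ?thesis using a i by (intro add_pos_pos mult_pos_pos) auto
qed

lemma sol_unique:
  assumes s: "sol lam mu alpha n {k..n-1} b" and s': "sol lam mu alpha n {k..n-1} b'"
    and a: "alpha > 0" and l: "\<forall>i\<le>n. lam i > 0" and m: "\<forall>i. 1 \<le> i \<and> i \<le> n \<longrightarrow> mu i > 0"
    and k: "1 \<le> k" "k < n"
  shows "b = b'"
proof
  fix i
  have E: "alpha * cc lam mu alpha k + mu k * (cc lam mu alpha k - cc lam mu alpha (k - 1)) > 0"
    using E_pos[OF a l m k] .
  have b0: "b 0 = b' 0" using sol_b0[OF s k l] sol_b0[OF s' k l] E
    by (metis mult_cancel_right less_irrefl)
  show "b i = b' i"
  proof (induction i)
    case 0 then show ?case using b0 .
  next
    case (Suc i)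
    show ?case
    proof (cases "Suc i \<le> k")
      case True
      then show ?thesis using sol_shape[OF s k l, of i] sol_shape[OF s' k l, of i] b0 by simp
    next
      case False
      show ?thesis
      proof (cases "Suc i \<le> n")
        case True
        have e: "alpha * b (Suc i) = lam (Suc i) + mu (Suc i) * (b i - b (Suc i))"
          using sol_eq[OF s, of "Suc i"] shut_iff[OF k(2), of "Suc i"] False True by simp
        have e': "alpha * b' (Suc i) = lam (Suc i) + mu (Suc i) * (b' i - b' (Suc i))"
          using sol_eq[OF s', of "Suc i"] shut_iff[OF k(2), of "Suc i"] False True by simp
        have mp: "alpha + mu (Suc i) > 0" using m a True by auto
        have "b (Suc i) = (lam (Suc i) + mu (Suc i) * b i) / (alpha + mu (Suc i))"
          using e mp by (simp add: field_simps)
        moreover have "b' (Suc i) = (lam (Suc i) + mu (Suc i) * b' i) / (alpha + mu (Suc i))"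
          using e' mp by (simp add: field_simps)
        ultimately show ?thesis using Suc.IH by simp
      next
        case False
        then show ?thesis using s s' unfolding sol_def by auto
      qed
    qed
  qed
qed

lemma sol_exists:
  assumes a: "alpha > 0" and l: "\<forall>i\<le>n. lam i > 0" and m: "\<forall>i. 1 \<le> i \<and> i \<le> n \<longrightarrow> mu i > 0"
    and k: "1 \<le> k" "k < n"
  shows "\<exists>b. sol lam mu alpha n {k..n-1} b"
proof -
  let ?c = "cc lam mu alpha"
  define E where "E = alpha * ?c k + mu k * (?c k - ?c (k - 1))"
  have E: "E > 0" using E_pos[OF a l m k] unfolding E_def .
  define t where "t = lam k / E"
  define B where "B i = (if i \<le> k then ?c i * t else if i \<le> n then gg lam mu alpha k (?c k * t) (i - k) else 0)" for i
  have "\<forall>i\<le>n. alpha * B i =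
        (if shut n {k..n-1} i then lam i else lam i * (B (Suc i) - B i))
        + (if i = 0 then 0 else mu i * (B (i - 1) - B i))"
  proof (intro allI impI)
    fix i assume i: "i \<le> n"
    show "alpha * B i =
        (if shut n {k..n-1} i then lam i else lam i * (B (Suc i) - B i))
        + (if i = 0 then 0 else mu i * (B (i - 1) - B i))"
    proof (cases "i < k")
      case True
      then have ns: "\<not> shut n {k..n-1} i" using shut_iff[OF k(2) i] by simp
      show ?thesis
      proof (cases i)
        case 0
        have "lam 0 > 0" using l by auto
        then show ?thesis using ns 0 k unfolding B_def by (simp add: field_simps)
      next
        case (Suc j)
        have lp: "lam (Suc j) > 0" using l i Suc by auto
        have "B (Suc (Suc j)) = ?c (Suc (Suc j)) * t" "B (Suc j) = ?c (Suc j) * t" "B j = ?c j * t"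
          using True Suc unfolding B_def by auto
        then show ?thesis using ns Suc lp by (simp add: field_simps)
      qed
    next
      case False
      then have sh: "shut n {k..n-1} i" using shut_iff[OF k(2) i] by simp
      show ?thesis
      proof (cases "i = k")
        case True
        obtain j where j: "k = Suc j" using k by (cases k) auto
        have "B k = ?c k * t" "B j = ?c j * t" using j unfolding B_def by auto
        moreover have "t * E = lam k" using E unfolding t_def by simp
        ultimately show ?thesis using sh True j unfolding E_def by (simp add: algebra_simps)
      next
        case False2: False
        define m' where "m' = i - k - 1"
        have m': "i - k = Suc m'" "i = k + Suc m'" using False False2 unfolding m'_def by auto
        have mp: "alpha + mu i > 0" using m a i k m' by auto
        have Bi: "B i = gg lam mu alpha k (?c k * t) (Suc m')" using m' i unfolding B_def by auto
        have Bi1: "B (i - 1) = gg lam mu alpha k (?c k * t) m'"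
          using m' i unfolding B_def by (cases m') auto
        show ?thesis using sh m' mp Bi Bi1 by (simp add: field_simps)
      qed
    qed
  qed
  moreover have "\<forall>i>n. B i = 0" using k unfolding B_def by auto
  ultimately have "sol lam mu alpha n {k..n-1} B" unfolding sol_def by blast
  then show ?thesis by blast
qed

lemma bS_sol:
  assumes a: "alpha > 0" and l: "\<forall>i\<le>n. lam i > 0" and m: "\<forall>i. 1 \<le> i \<and> i \<le> n \<longrightarrow> mu i > 0"
    and k: "1 \<le> k" "k < n"
  shows "sol lam mu alpha n {k..n-1} (bS lam mu alpha n {k..n-1})"
proof -
  have eq: "bS lam mu alpha n {k..n-1} = (THE b. sol lam mu alpha n {k..n-1} b)"
    unfolding bS_def sol_def by simp
  obtain b where b: "sol lam mu alpha n {k..n-1} b" using sol_exists[OF a l m k] by blast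
  have "\<exists>!b. sol lam mu alpha n {k..n-1} b"
    using b sol_unique[OF _ _ a l m k] by blast
  then show ?thesis unfolding eq by (rule theI')
qed

lemma key:
  assumes a: "alpha > 0" and l: "\<forall>i\<le>n. lam i > 0" and m: "\<forall>i. 1 \<le> i \<and> i \<le> n \<longrightarrow> mu i > 0"
    and d1: "lam 1 - mu 1 < lam 0"
    and dm: "\<forall>i. 1 \<le> i \<and> i + 1 < n \<longrightarrow> lam (i+1) - mu (i+1) \<le> lam i - mu i"
    and k: "1 \<le> k" "k < n"
  shows "bS lam mu alpha n {k..n-1} k - bS lam mu alpha n {k..n-1} (k - 1) \<le> 1"
proof -
  let ?c = "cc lam mu alpha"
  let ?b = "bS lam mu alpha n {k..n-1}"
  have s: "sol lam mu alpha n {k..n-1} ?b" by (rule bS_sol[OF a l m k])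
  obtain j where j: "k = Suc j" using k by (cases k) auto
  define E where "E = alpha * ?c k + mu k * (?c k - ?c (k - 1))"
  have E: "E > 0" using E_pos[OF a l m k] unfolding E_def .
  have b0: "?b 0 * E = lam k" using sol_b0[OF s k l] unfolding E_def .
  have sh: "?b j = ?c j * ?b 0" "?b k = ?c k * ?b 0" using sol_shape[OF s k l, of j] j by auto
  have Q: "(lam k - mu k) * (?c k - ?c (k - 1)) \<le> alpha * ?c k"
    using cc_Q[OF a l m d1 dm, of j] j k by simp
  have LE: "lam k * (?c k - ?c (k - 1)) \<le> E" using Q unfolding E_def by (simp add: algebra_simps)
  have "E * (?b 0 * (?c k - ?c (k - 1))) = (?b 0 * E) * (?c k - ?c (k - 1))" by (simp add: ac_simps)
  also have "\<dots> = lam k * (?c k - ?c (k - 1))" using b0 by simp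
  also have "\<dots> \<le> E * 1" using \<open>lam k * (?c k - ?c (k - 1)) \<le> E\<close> by simp
  finally have "E * (?b 0 * (?c k - ?c (k - 1))) \<le> E * 1" .
  then have "?b 0 * (?c k - ?c (k - 1)) \<le> 1" using E
    by (rule mult_left_le_imp_le)
  then show ?thesis using sh j by (simp add: algebra_simps)
qed

theorem lemma7:
  fixes lam mu h :: "nat \<Rightarrow> real" and alpha :: real and n :: nat
  assumes "n \<ge> 1" and "alpha > 0"
    and "\<forall>i\<le>n. lam i > 0" and "\<forall>i. 1 \<le> i \<and> i \<le> n \<longrightarrow> mu i > 0" and "mu 0 = 0"
    and "\<forall>i. 1 \<le> i \<and> i \<le> n - 1 \<longrightarrow>
           0 \<le> Dlt (dd lam mu) (i + 1) \<and> Dlt (dd lam mu) (i + 1) \<le> Dlt (dd lam mu) i"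
    and "Dlt (dd lam mu) 1 > 0"
    and "\<forall>i. 1 \<le> i \<and> i \<le> n - 1 \<longrightarrow> Dlt h (i + 1) \<ge> Dlt h i \<and> Dlt h i \<ge> 0"
  shows "(\<forall>j. 1 \<le> j \<and> j \<le> n - 1 \<longrightarrow>
            Dlt h j / (alpha + Dlt (dd lam mu) j) \<le> Dlt h (j + 1) / (alpha + Dlt (dd lam mu) (j + 1)))
       \<and> (\<forall>j \<le> n - 1. nu lam mu h alpha n j \<le> Dlt h (j + 1) / (alpha + Dlt (dd lam mu) (j + 1)))
       \<and> (\<forall>j. j < n - 1 \<longrightarrow> nu lam mu h alpha n j \<le> nu lam mu h alpha n (j + 1))"
proof -
  note a = assms(2) and l = assms(3) and m = assms(4)
  define A where "A i = alpha + Dlt (dd lam mu) i" for i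
  have Apos: "A i > 0" if "1 \<le> i" "i \<le> n" for i
  proof (cases "i = 1")
    case True then show ?thesis using assms(7) a unfolding A_def by simp
  next
    case False
    then have "1 \<le> i - 1 \<and> i - 1 \<le> n - 1" using that by auto
    then have "0 \<le> Dlt (dd lam mu) ((i - 1) + 1)" using assms(6)[rule_format, of "i - 1"] by blast
    then show ?thesis using False that a unfolding A_def by simp
  qed
  have PA: "\<forall>j. 1 \<le> j \<and> j \<le> n - 1 \<longrightarrow> Dlt h j / A j \<le> Dlt h (j + 1) / A (j + 1)"
  proof (intro allI impI)
    fix j assume j: "1 \<le> j \<and> j \<le> n - 1"
    have h: "Dlt h (j + 1) \<ge> Dlt h j" "Dlt h j \<ge> 0" using assms(8) j by auto
    have AA: "A (j + 1) \<le> A j" using assms(6) j unfolding A_def by auto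
    have p1: "A j > 0" "A (j+1) > 0" using Apos j by auto
    have "Dlt h j / A j \<le> Dlt h (j + 1) / A j" using h p1 by (simp add: divide_right_mono)
    also have "\<dots> \<le> Dlt h (j + 1) / A (j + 1)" using h p1 AA
      by (intro divide_left_mono) auto
    finally show "Dlt h j / A j \<le> Dlt h (j + 1) / A (j + 1)" .
  qed
  have d1: "lam 1 - mu 1 < lam 0" using assms(7) assms(5) unfolding Dlt_def dd_def by simp
  have dm: "\<forall>i. 1 \<le> i \<and> i + 1 < n \<longrightarrow> lam (i+1) - mu (i+1) \<le> lam i - mu i"
    using assms(6) unfolding Dlt_def dd_def by force
  have W: "wS lam mu alpha n (Sk n (j + 2)) j / rho lam mu j \<ge> 0" if j: "j + 2 \<le> n" for j
  proof -
    have S: "Sk n (j + 2) = {Suc j..n-1}" unfolding Sk_def by simp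
    have "bS lam mu alpha n {Suc j..n-1} (Suc j) - bS lam mu alpha n {Suc j..n-1} (Suc j - 1) \<le> 1"
      using key[OF a l m d1 dm, of "Suc j"] j by simp
    moreover have "lam j > 0" "mu (Suc j) > 0" using l m j by auto
    ultimately show ?thesis unfolding wS_def rho_def S by simp
  qed
  have rec: "nu lam mu h alpha n (Suc j) = nu lam mu h alpha n j +
     (Dlt h (j + 2) - nu lam mu h alpha n j * A (j + 2)) /
     (A (j + 2) + wS lam mu alpha n (Sk n (j + 2)) j / rho lam mu j)" for j
    unfolding A_def by simp
  have PB: "\<forall>j \<le> n - 1. nu lam mu h alpha n j \<le> Dlt h (j + 1) / A (j + 1)"
  proof (intro allI impI)
    fix j assume "j \<le> n - 1"
    then show "nu lam mu h alpha n j \<le> Dlt h (j + 1) / A (j + 1)"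
    proof (induction j)
      case 0 then show ?case unfolding A_def by simp
    next
      case (Suc j)
      let ?x = "nu lam mu h alpha n j"
      let ?W = "wS lam mu alpha n (Sk n (j + 2)) j / rho lam mu j"
      have x: "?x \<le> Dlt h (j + 2) / A (j + 2)"
        using Suc PA[rule_format, of "Suc j"] by simp
      have Ap: "A (j + 2) > 0" using Apos Suc.prems by auto
      have N: "Dlt h (j + 2) - ?x * A (j + 2) \<ge> 0" using x Ap by (simp add: pos_le_divide_eq)
      have Wp: "?W \<ge> 0" using W Suc.prems by auto
      have "(Dlt h (j + 2) - ?x * A (j + 2)) / (A (j + 2) + ?W) \<le> (Dlt h (j + 2) - ?x * A (j + 2)) / A (j + 2)"
        using N Wp Ap by (intro divide_left_mono) auto
      also have "\<dots> = Dlt h (j + 2) / A (j + 2) - ?x" using Ap by (simp add: field_simps)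
      finally show ?case using rec[of j] by (simp add: numeral_2_eq_2)
    qed
  qed
  have PC: "\<forall>j. j < n - 1 \<longrightarrow> nu lam mu h alpha n j \<le> nu lam mu h alpha n (j + 1)"
  proof (intro allI impI)
    fix j assume j: "j < n - 1"
    let ?x = "nu lam mu h alpha n j"
    let ?W = "wS lam mu alpha n (Sk n (j + 2)) j / rho lam mu j"
    have x: "?x \<le> Dlt h (j + 2) / A (j + 2)"
      using PB[rule_format, of j] PA[rule_format, of "Suc j"] j by simp
    have Ap: "A (j + 2) > 0" using Apos j by auto
    have N: "Dlt h (j + 2) - ?x * A (j + 2) \<ge> 0" using x Ap by (simp add: pos_le_divide_eq)
    have Wp: "?W \<ge> 0" using W j by auto
    have "(Dlt h (j + 2) - ?x * A (j + 2)) / (A (j + 2) + ?W) \<ge> 0" using N Wp Ap by simp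
    then show "?x \<le> nu lam mu h alpha n (j + 1)" using rec[of j] by simp
  qed
  show ?thesis using PA PB PC unfolding A_def by simp
qed

end
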